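(* Let $G$ be a finite simple graph. Define recursively: $G_1=G$; for $i\ge 1$, if $G_i$ is nonempty, let $F_i$ be an induced linear forest of $G_i$ of maximum order, chosen among all maximum-order induced linear forests of $G_i$ to have the minimum number of edges, and let $G_{i+1}=G\setminus\bigcup_{j=1}^{i}V(F_j)$ (the subgraph induced on the remaining vertices). Stop when all vertices are used, obtaining a partition $V(G)=V(F_1)\cup\cdots\cup V(F_k)$. Then for every $i\ge 2$, every $v\in V(F_i)$ and every $j<i$, the vertex $v$ has at least $2$ neighbors in $V(F_j)$.
   Context: A linear forest is a forest each of whose connected components is a path (a single vertex counts as a path). An induced linear forest of a graph $H$ is an induced subgraph of $H$ that is a linear forest; its order is its number of vertices and its size is its number of edges. *)

theory Defs
  imports Main
begin

definition simple_graph :: "'a set \<Rightarrow> ('a \<Rightarrow> 'a \<Rightarrow> bool) \<Rightarrow> bool" where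
  "simple_graph V E \<longleftrightarrow> finite V \<and>
     (\<forall>u v. E u v \<longrightarrow> u \<in> V \<and> v \<in> V \<and> u \<noteq> v \<and> E v u)"

definition induced_adj :: "('a \<Rightarrow> 'a \<Rightarrow> bool) \<Rightarrow> 'a set \<Rightarrow> 'a \<Rightarrow> 'a \<Rightarrow> bool" where
  "induced_adj E S u v \<longleftrightarrow> u \<in> S \<and> v \<in> S \<and> E u v"

definition is_component :: "('a \<Rightarrow> 'a \<Rightarrow> bool) \<Rightarrow> 'a set \<Rightarrow> 'a set \<Rightarrow> bool" where
  "is_component E S C \<longleftrightarrow> (\<exists>u\<in>S. C = {v. (induced_adj E S)\<^sup>*\<^sup>* u v})"

definition induces_path :: "('a \<Rightarrow> 'a \<Rightarrow> bool) \<Rightarrow> 'a set \<Rightarrow> bool" where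
  "induces_path E C \<longleftrightarrow> (\<exists>xs. distinct xs \<and> set xs = C \<and>
     (\<forall>i j. i < length xs \<longrightarrow> j < length xs \<longrightarrow>
        (E (xs ! i) (xs ! j) \<longleftrightarrow> i = Suc j \<or> j = Suc i)))"

definition induced_linear_forest :: "'a set \<Rightarrow> ('a \<Rightarrow> 'a \<Rightarrow> bool) \<Rightarrow> 'a set \<Rightarrow> bool" where
  "induced_linear_forest V E S \<longleftrightarrow> S \<subseteq> V \<and>
     (\<forall>C. is_component E S C \<longrightarrow> induces_path E C)"

definition induced_size :: "('a \<Rightarrow> 'a \<Rightarrow> bool) \<Rightarrow> 'a set \<Rightarrow> nat" where
  "induced_size E S = card {{u, v} | u v. u \<in> S \<and> v \<in> S \<and> E u v}"

definition optimal_ilf :: "'a set \<Rightarrow> ('a \<Rightarrow> 'a \<Rightarrow> bool) \<Rightarrow> 'a set \<Rightarrow> bool" where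
  "optimal_ilf V E S \<longleftrightarrow> induced_linear_forest V E S \<and>
     (\<forall>T. induced_linear_forest V E T \<longrightarrow> card T \<le> card S) \<and>
     (\<forall>T. induced_linear_forest V E T \<and> card T = card S \<longrightarrow>
          induced_size E S \<le> induced_size E T)"

end

theory Submission
  imports Defs
begin

lemma path_sub:
  fixes xs :: "'a list"
  assumes dist: "distinct xs"
    and pe: "\<forall>i j. i < length xs \<longrightarrow> j < length xs \<longrightarrow> (E (xs!i) (xs!j) \<longleftrightarrow> i = Suc j \<or> j = Suc i)"
    and sub: "D \<subseteq> set xs" and rD: "r \<in> D"
    and conn: "\<forall>y\<in>D. (induced_adj E D)\<^sup>*\<^sup>* r y"
  shows "induces_path E D"
proof -
  define K where "K = {k. k < length xs \<and> xs!k \<in> D}"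
  have finK: "finite K" unfolding K_def by auto
  obtain c where cK: "c \<in> K" and rc: "xs!c = r"
    using rD sub unfolding K_def by (metis (mono_tags, lifting) in_set_conv_nth mem_Collect_eq subsetD)
  have Kne: "K \<noteq> {}" using cK by auto
  define a where "a = Min K"
  define b where "b = Max K"
  have aK: "a \<in> K" and bK: "b \<in> K" using finK Kne a_def b_def by auto
  have ab: "a \<le> b" using finK Kne a_def b_def by (simp add: aK)
  have bl: "b < length xs" using bK K_def by auto
  have amin: "\<And>k. k \<in> K \<Longrightarrow> a \<le> k" using finK a_def by auto
  have bmax: "\<And>k. k \<in> K \<Longrightarrow> k \<le> b" using finK b_def by auto
  have ix: "\<And>y. y \<in> D \<Longrightarrow> \<exists>k<length xs. xs!k = y" using sub by (metis in_set_conv_nth subsetD)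
  have uniq: "\<And>k l. k < length xs \<Longrightarrow> l < length xs \<Longrightarrow> xs!k = xs!l \<Longrightarrow> k = l"
    using dist nth_eq_iff_index_eq by blast
  have interval: "m \<in> K" if am: "a \<le> m" and mb: "m \<le> b" for m
  proof (rule ccontr)
    assume mK: "m \<notin> K"
    have "a < m" "m < b" using am mb mK aK bK by (auto simp: le_less)
    have ml: "m < length xs" using mb bl by auto
    have xm: "xs!m \<notin> D" using mK ml K_def by auto
    have cl: "c < length xs" using cK K_def by auto
    have "c \<noteq> m" using cK mK by auto
    then consider "c < m" | "m < c" by linarith
    then show False
    proof cases
      case 1
      have inv: "\<forall>k<length xs. xs!k = y \<longrightarrow> k < m" if "(induced_adj E D)\<^sup>*\<^sup>* r y" for y
        using that
      proof (induction rule: rtranclp_induct)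
        case base then show ?case using 1 rc uniq cl by blast
      next
        case (step y z)
        have yD: "y \<in> D" and zD: "z \<in> D" and Eyz: "E y z"
          using step.hyps(2) unfolding induced_adj_def by auto
        obtain ky where ky: "ky < length xs" "xs!ky = y" using ix yD by blast
        obtain kz where kz: "kz < length xs" "xs!kz = z" using ix zD by blast
        have "ky < m" using step.IH ky by blast
        moreover have "ky = Suc kz \<or> kz = Suc ky" using pe ky kz Eyz by blast
        moreover have "kz \<noteq> m" using xm kz zD by auto
        ultimately have "kz < m" by linarith
        then show ?case using kz uniq by blast
      qed
      have "xs!b \<in> D" using bK K_def by auto
      then have "b < m" using inv conn bl by blast
      then show False using \<open>m < b\<close> by simp
    next
      case 2
      have inv: "\<forall>k<length xs. xs!k = y \<longrightarrow> m < k" if "(induced_adj E D)\<^sup>*\<^sup>* r y" for y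
        using that
      proof (induction rule: rtranclp_induct)
        case base then show ?case using 2 rc uniq cl by blast
      next
        case (step y z)
        have yD: "y \<in> D" and zD: "z \<in> D" and Eyz: "E y z"
          using step.hyps(2) unfolding induced_adj_def by auto
        obtain ky where ky: "ky < length xs" "xs!ky = y" using ix yD by blast
        obtain kz where kz: "kz < length xs" "xs!kz = z" using ix zD by blast
        have "m < ky" using step.IH ky by blast
        moreover have "ky = Suc kz \<or> kz = Suc ky" using pe ky kz Eyz by blast
        moreover have "kz \<noteq> m" using xm kz zD by auto
        ultimately have "m < kz" by linarith
        then show ?case using kz uniq by blast
      qed
      have "xs!a \<in> D" using aK K_def by auto
      then have "m < a" using inv conn aK K_def by blast
      then show False using \<open>a < m\<close> by simp
    qed
  qed
  define ys where "ys = take (Suc b - a) (drop a xs)"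
  have lys: "length ys = Suc b - a" using ys_def bl ab by auto
  have nys: "\<And>i. i < length ys \<Longrightarrow> ys!i = xs!(a+i)" using ys_def bl ab by auto
  have "distinct ys" using dist ys_def by auto
  moreover have "set ys = D"
  proof
    show "set ys \<subseteq> D"
    proof
      fix y assume "y \<in> set ys"
      then obtain i where i: "i < length ys" "ys!i = y" by (metis in_set_conv_nth)
      have "a + i \<in> K" using interval lys i(1) by auto
      then show "y \<in> D" using K_def nys i by auto
    qed
    show "D \<subseteq> set ys"
    proof
      fix y assume yD: "y \<in> D"
      then obtain k where k: "k < length xs" "xs!k = y" using ix by blast
      have "k \<in> K" using k yD K_def by auto
      then have "a \<le> k" "k \<le> b" using amin bmax by auto
      then have "k - a < length ys" "ys!(k-a) = y" using lys nys k by auto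
      then show "y \<in> set ys" by (metis nth_mem)
    qed
  qed
  moreover have "\<forall>i j. i < length ys \<longrightarrow> j < length ys \<longrightarrow>
        (E (ys ! i) (ys ! j) \<longleftrightarrow> i = Suc j \<or> j = Suc i)"
  proof (intro allI impI)
    fix i j assume i: "i < length ys" and j: "j < length ys"
    have "a + i < length xs" "a + j < length xs" using i j lys bl by auto
    then have "E (xs!(a+i)) (xs!(a+j)) \<longleftrightarrow> a+i = Suc (a+j) \<or> a+j = Suc (a+i)" using pe by blast
    then show "E (ys ! i) (ys ! j) \<longleftrightarrow> i = Suc j \<or> j = Suc i" using nys i j by auto
  qed
  ultimately show ?thesis unfolding induces_path_def by blast
qed

lemma comp_conn:
  assumes "D = {y. (induced_adj E T)\<^sup>*\<^sup>* r y}"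
  shows "\<forall>y\<in>D. (induced_adj E D)\<^sup>*\<^sup>* r y"
proof
  fix y assume "y \<in> D"
  then have "(induced_adj E T)\<^sup>*\<^sup>* r y" using assms by auto
  then show "(induced_adj E D)\<^sup>*\<^sup>* r y"
  proof (induction rule: rtranclp_induct)
    case base then show ?case by simp
  next
    case (step y z)
    have "y \<in> D" "z \<in> D" using step.hyps assms by auto
    then have "induced_adj E D y z" using step.hyps(2) unfolding induced_adj_def by auto
    then show ?case using step.IH by auto
  qed
qed

lemma ilf_subset:
  assumes "induced_linear_forest V E S" and "T \<subseteq> S"
  shows "induced_linear_forest V E T"
  unfolding induced_linear_forest_def
proof (intro conjI allI impI)
  show "T \<subseteq> V" using assms unfolding induced_linear_forest_def by auto
  fix D assume "is_component E T D"
  then obtain r where rT: "r \<in> T" and D: "D = {y. (induced_adj E T)\<^sup>*\<^sup>* r y}"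
    unfolding is_component_def by auto
  define C where "C = {y. (induced_adj E S)\<^sup>*\<^sup>* r y}"
  have mono: "induced_adj E T \<le> induced_adj E S" using assms(2) unfolding induced_adj_def by auto
  have DC: "D \<subseteq> C" unfolding D C_def using rtranclp_mono[OF mono] by auto
  have "is_component E S C" unfolding is_component_def C_def using rT assms(2) by auto
  then have "induces_path E C" using assms(1) unfolding induced_linear_forest_def by auto
  then obtain xs where xs: "distinct xs" "set xs = C"
    "\<forall>i j. i < length xs \<longrightarrow> j < length xs \<longrightarrow> (E (xs!i) (xs!j) \<longleftrightarrow> i = Suc j \<or> j = Suc i)"
    unfolding induces_path_def by blast
  show "induces_path E D"
    by (rule path_sub[OF xs(1) xs(3)]) (use DC xs(2) D comp_conn[OF D] in auto)
qed

lemma add_vertex: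
  assumes ilf: "induced_linear_forest V E S" and vV: "v \<in> V" and vS: "v \<notin> S"
    and sym: "\<forall>x y. E x y \<longrightarrow> E y x" and irr: "\<forall>x. \<not> E x x"
    and atmost: "\<forall>u w. u \<in> S \<longrightarrow> w \<in> S \<longrightarrow> E v u \<longrightarrow> E v w \<longrightarrow> u = w"
    and iso: "\<forall>u\<in>S. E v u \<longrightarrow> (\<forall>w\<in>S. \<not> E u w)"
  shows "induced_linear_forest V E (insert v S)"
  unfolding induced_linear_forest_def
proof (intro conjI allI impI)
  show "insert v S \<subseteq> V" using ilf vV unfolding induced_linear_forest_def by auto
  fix C assume "is_component E (insert v S) C"
  then obtain r where rT: "r \<in> insert v S" and C: "C = {y. (induced_adj E (insert v S))\<^sup>*\<^sup>* r y}"
    unfolding is_component_def by auto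
  let ?R = "induced_adj E (insert v S)"
  show "induces_path E C"
  proof (cases "v \<in> C")
    case True
    define W where "W = insert v {u\<in>S. E v u}"
    have closed: "z \<in> W" if "?R y z" "y \<in> W" for y z
      using that iso unfolding W_def induced_adj_def by auto
    have closed2: "y \<in> W" if "?R y z" "z \<in> W" for y z
    proof -
      have "?R z y" using that(1) sym unfolding induced_adj_def by auto
      then show ?thesis using closed that(2) by blast
    qed
    have "?R\<^sup>*\<^sup>* r v" using True C by auto
    then have rW: "r \<in> W"
    proof (induction rule: converse_rtranclp_induct)
      case base then show ?case by (simp add: W_def)
    next
      case (step y z) show ?case by (rule closed2[OF step(1) step(3)])
    qed
    have CW: "C \<subseteq> W"
    proof
      fix y assume "y \<in> C"
      then have "?R\<^sup>*\<^sup>* r y" using C by auto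
      then show "y \<in> W"
      proof (induction rule: rtranclp_induct)
        case base show ?case by (rule rW)
      next
        case (step y z) show ?case by (rule closed[OF step(2) step(3)])
      qed
    qed
    have WC: "W \<subseteq> C"
    proof
      fix y assume "y \<in> W"
      then consider "y = v" | "y \<in> S" "E v y" unfolding W_def by auto
      then show "y \<in> C"
      proof cases
        case 1 then show ?thesis using True by simp
      next
        case 2
        then have "?R v y" unfolding induced_adj_def by auto
        then show ?thesis using True C by (auto intro: rtranclp.rtrancl_into_rtrancl)
      qed
    qed
    have CeqW: "C = W" using CW WC by auto
    show ?thesis
    proof (cases "\<exists>u\<in>S. E v u")
      case True
      then obtain u where u: "u \<in> S" "E v u" by auto
      have "W = {v, u}" unfolding W_def using atmost u by auto
      moreover have "u \<noteq> v" using u vS by auto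
      ultimately show ?thesis unfolding induces_path_def CeqW
        apply (intro exI[of _ "[v, u]"])
        using u sym irr by (auto simp: less_Suc_eq)
    next
      case False
      then have "W = {v}" unfolding W_def by auto
      then show ?thesis unfolding induces_path_def CeqW
        by (intro exI[of _ "[v]"]) (use irr in auto)
    qed
  next
    case False
    have rS: "r \<in> S" using False C rT by auto
    have eq: "C = {y. (induced_adj E S)\<^sup>*\<^sup>* r y}"
    proof
      show "C \<subseteq> {y. (induced_adj E S)\<^sup>*\<^sup>* r y}"
      proof
        fix y assume "y \<in> C"
        then have "?R\<^sup>*\<^sup>* r y" using C by auto
        then show "y \<in> {y. (induced_adj E S)\<^sup>*\<^sup>* r y}"
        proof (induction rule: rtranclp_induct)
          case base then show ?case by simp
        next
          case (step y z)
          have "y \<noteq> v" "z \<noteq> v" using False C step.hyps by (auto intro: rtranclp.rtrancl_into_rtrancl)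
          then have "induced_adj E S y z" using step.hyps(2) unfolding induced_adj_def by auto
          then show ?case using step.IH by (auto intro: rtranclp.rtrancl_into_rtrancl)
        qed
      qed
      have mono: "induced_adj E S \<le> ?R" unfolding induced_adj_def by auto
      show "{y. (induced_adj E S)\<^sup>*\<^sup>* r y} \<subseteq> C" unfolding C using rtranclp_mono[OF mono] by auto
    qed
    have "is_component E S C" unfolding is_component_def using eq rS by auto
    then show ?thesis using ilf unfolding induced_linear_forest_def by auto
  qed
qed

theorem claim1:
  fixes V :: "'a set" and E :: "'a \<Rightarrow> 'a \<Rightarrow> bool" and F :: "nat \<Rightarrow> 'a set" and k :: nat
  assumes "simple_graph V E"
    and "\<And>i. 1 \<le> i \<Longrightarrow> i \<le> k \<Longrightarrow> V - (\<Union>j\<in>{1..<i}. F j) \<noteq> {}"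
    and "\<And>i. 1 \<le> i \<Longrightarrow> i \<le> k \<Longrightarrow> optimal_ilf (V - (\<Union>j\<in>{1..<i}. F j)) E (F i)"
    and "V = (\<Union>j\<in>{1..k}. F j)"
  shows "\<forall>i\<in>{2..k}. \<forall>v\<in>F i. \<forall>j\<in>{1..<i}. 2 \<le> card {u \<in> F j. E v u}"
proof (intro ballI)
  fix i v j assume i: "i \<in> {2..k}" and vi: "v \<in> F i" and j: "j \<in> {1..<i}"
  have finV: "finite V" and sym: "\<forall>x y. E x y \<longrightarrow> E y x" and irr: "\<forall>x. \<not> E x x"
    using assms(1) unfolding simple_graph_def by auto
  define S where "S = F j"
  define Vj where "Vj = V - (\<Union>l\<in>{1..<j}. F l)"
  have opt: "optimal_ilf Vj E S" using assms(3)[of j] i j unfolding S_def Vj_def by auto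
  have opti: "optimal_ilf (V - (\<Union>l\<in>{1..<i}. F l)) E (F i)" using assms(3)[of i] i by auto
  have "F i \<subseteq> V - (\<Union>l\<in>{1..<i}. F l)" using opti
    unfolding optimal_ilf_def induced_linear_forest_def by auto
  then have vrem: "v \<in> V - (\<Union>l\<in>{1..<i}. F l)" using vi by auto
  have vS: "v \<notin> S" using vrem j unfolding S_def by auto
  have vVj: "v \<in> Vj" using vrem j unfolding Vj_def by auto
  have ilfS: "induced_linear_forest Vj E S" using opt unfolding optimal_ilf_def by auto
  have SVj: "S \<subseteq> Vj" using ilfS unfolding induced_linear_forest_def by auto
  have finS: "finite S" proof - have "S \<subseteq> V" using SVj unfolding Vj_def by blast then show ?thesis using finV by (rule finite_subset) qed
  have maxS: "\<And>T. induced_linear_forest Vj E T \<Longrightarrow> card T \<le> card S"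
    using opt unfolding optimal_ilf_def by auto
  have minS: "\<And>T. induced_linear_forest Vj E T \<Longrightarrow> card T = card S \<Longrightarrow> induced_size E S \<le> induced_size E T"
    using opt unfolding optimal_ilf_def by auto
  show "2 \<le> card {u \<in> F j. E v u}"
  proof (rule ccontr)
    assume "\<not> 2 \<le> card {u \<in> F j. E v u}"
    then have "card {u \<in> S. E v u} \<le> Suc 0" unfolding S_def by auto
    then have atmost: "\<forall>u w. u \<in> S \<longrightarrow> w \<in> S \<longrightarrow> E v u \<longrightarrow> E v w \<longrightarrow> u = w"
    proof (intro allI impI)
      fix u w assume "u \<in> S" "w \<in> S" "E v u" "E v w"
      then have "u \<in> {u \<in> S. E v u}" "w \<in> {u \<in> S. E v u}" by auto
      moreover have "finite {u \<in> S. E v u}" using finS by simp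
      ultimately show "u = w" using \<open>card {u \<in> S. E v u} \<le> Suc 0\<close> card_le_Suc0_iff_eq by blast
    qed
    show False
    proof (cases "\<exists>u\<in>S. E v u \<and> (\<exists>w\<in>S. E u w)")
      case True
      then obtain u w where u: "u \<in> S" "E v u" and w: "w \<in> S" "E u w" by auto
      define T where "T = insert v (S - {u})"
      have "induced_linear_forest Vj E (S - {u})" using ilf_subset[OF ilfS] by auto
      then have ilfT: "induced_linear_forest Vj E T" unfolding T_def
        by (rule add_vertex) (use vVj vS sym irr atmost u in auto)
      have cT: "card T = card S"
      proof -
        have f1: "finite (S - {u})" using finS by simp
        have "v \<notin> S - {u}" using vS by simp
        then have "card T = Suc (card (S - {u}))" unfolding T_def using f1 by simp
        moreover have "card (S - {u}) = card S - 1" using u(1) finS by (simp add: card_Diff_singleton)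
        moreover have "card S > 0" using u(1) finS card_gt_0_iff by blast
        ultimately show ?thesis by simp
      qed
      have le: "induced_size E S \<le> induced_size E T" using minS[OF ilfT cT] .
      define ES where "ES = {{a, b} | a b. a \<in> S \<and> b \<in> S \<and> E a b}"
      define ET where "ET = {{a, b} | a b. a \<in> T \<and> b \<in> T \<and> E a b}"
      have finES: "finite ES"
      proof -
        have "ES \<subseteq> Pow S" unfolding ES_def by auto
        then show ?thesis using finS finite_subset by blast
      qed
      have sub: "ET \<subseteq> ES"
      proof
        fix e assume "e \<in> ET"
        then obtain a b where e: "e = {a, b}" "a \<in> T" "b \<in> T" "E a b" unfolding ET_def by auto
        have "a \<noteq> v"
        proof
          assume av: "a = v"
          have "b \<noteq> v" using av e(4) irr by auto
          then have "b \<in> S" "b \<noteq> u" using e(3) unfolding T_def by auto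
          moreover have "E v b" using av e(4) by simp
          ultimately show False using atmost u by blast
        qed
        moreover have "b \<noteq> v"
        proof
          assume bv: "b = v"
          have "a \<noteq> v" using bv e(4) irr by auto
          then have "a \<in> S" "a \<noteq> u" using e(2) unfolding T_def by auto
          moreover have "E v a" using bv e(4) sym by blast
          ultimately show False using atmost u by blast
        qed
        ultimately show "e \<in> ES" using e unfolding ES_def T_def by auto
      qed
      have "{u, w} \<in> ES" unfolding ES_def using u w by auto
      moreover have "{u, w} \<notin> ET"
      proof
        assume "{u, w} \<in> ET"
        then obtain a b where "{u, w} = {a, b}" "a \<in> T" "b \<in> T" unfolding ET_def by auto
        then have "u \<in> T" by auto
        then show False unfolding T_def using u vS by auto
      qed
      ultimately have "ET \<subset> ES" using sub by auto
      then have "card ET < card ES" using finES psubset_card_mono by auto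
      then show False using le unfolding induced_size_def ES_def ET_def by auto
    next
      case False
      have iso: "\<forall>u\<in>S. E v u \<longrightarrow> (\<forall>w\<in>S. \<not> E u w)" using False by blast
      have "induced_linear_forest Vj E (insert v S)"
        by (rule add_vertex[OF ilfS vVj vS sym irr atmost iso])
      then have "card (insert v S) \<le> card S" using maxS by auto
      then show False using finS vS by auto
    qed
  qed
qed

end
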